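(* Let $\lambda\in P$, $\lhd\in\mathrm{RO}(\lambda,\Delta^+)$ and $w\in W$. For every $A\in\mathcal{A}(w,\Gamma)$, $$n(A)\equiv\mathrm{nega}(\Xi(A))+\ell(\mathrm{end}(A))-\ell(\iota(\Xi(A)))\pmod 2.$$
   Context: Let $\mathfrak{g}$ be a finite-dimensional complex simple Lie algebra with root system $\Delta$, positive roots $\Delta^+$, Weyl group $W$ with length function $\ell$ and reflections $s_\alpha$, weight lattice $P$, pairing $\langle\cdot,\cdot\rangle$, $\alpha^\vee$ the coroot of $\alpha$, $\rho=\frac12\sum_{\alpha\in\Delta^+}\alpha$. For $\alpha\in\Delta$, $\operatorname{sgn}(\alpha)=\pm1$ according as $\alpha\in\pm\Delta^+$, and $|\alpha|=\operatorname{sgn}(\alpha)\alpha$. For $\lambda\in P$, $\Delta^+(\lambda)_{>0}$, $\Delta^+(\lambda)_{=0}$, $\Delta^+(\lambda)_{<0}$ are the sets of $\alpha\in\Delta^+$ with $\langle\lambda,\alpha^\vee\rangle>0$, $=0$, $<0$. Quantum Bruhat graph $\mathrm{QBG}(W)$: vertices $W$; an edge $x\xrightarrow{\alpha}y$ ($\alpha\in\Delta^+$) whenever $y=xs_\alpha$ and either $\ell(y)=\ell(x)+1$ (Bruhat edge) or $\ell(y)=\ell(x)-2\langle\rho,\alpha^\vee\rangle+1$ (quantum edge). For $v,u\in W$, $\ell(v\Rightarrow u)$ denotes the length of a shortest directed path from $v$ to $u$ in $\mathrm{QBG}(W)$. Reflection orders: a total order $\lhd$ on $\Delta^+$ is a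 reflection order if whenever $\alpha,\beta,\alpha+\beta\in\Delta^+$, either $\alpha\lhd\alpha+\beta\lhd\beta$ or $\beta\lhd\alpha+\beta\lhd\alpha$; $\mathrm{RO}(\lambda,\Delta^+)$ is the set of those with $\alpha\lhd\beta\lhd\gamma$ for $\alpha\in\Delta^+(\lambda)_{<0}$, $\beta\in\Delta^+(\lambda)_{=0}$, $\gamma\in\Delta^+(\lambda)_{>0}$. Fix such $\lhd$. Interpolated QLS paths: for $x,y\in W$, $\sigma\in\mathbb{Q}$, write $x\overset{(\lambda,+)}{\Longrightarrow}_\sigma y$ if there is a directed path $x=x_0\xrightarrow{\gamma_1}x_1\to\cdots\xrightarrow{\gamma_r}x_r=y$ in $\mathrm{QBG}(W)$ ($r\ge0$) with all $\gamma_k\in\Delta^+(\lambda)_{>0}$, $\gamma_{k+1}\lhd\gamma_k$ for all $k$, and $\sigma\langle\lambda,\gamma_k^\vee\rangle\in\mathbb{Z}$ for all $k$; $x\overset{(\lambda,-)}{\Longrightarrow}_\sigma y$ is defined identically with $\Delta^+(\lambda)_{<0}$ in place of $\Delta^+(\lambda)_{>0}$. An interpolated QLS path of shape $\lambda$ is a triple $\eta=(x_1,\dots,x_s;y_1,\dots,y_{s-1};\sigma_0,\dots,\sigma_s)$ ($s\ge1$) with $x_i,y_i\in W$, $x_i\ne x_{i+1}$, $y_i\ne y_{i+1}$, $\sigma_i\in\mathbb{Q}$, $0=\sigma_0<\sigma_1<\dots<\sigma_s=1$, and for $1\le i\le s-1$: $x_{i+1}\overset{(\lambda,-)}{\Longrightarrow}_{\sigma_i}y_i$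 and $y_i\overset{(\lambda,+)}{\Longrightarrow}_{\sigma_i}x_i$. $\mathrm{IQLS}(\lambda)$ is the set of these; $\iota(\eta):=x_1$; $\mathrm{nega}(\eta):=\sum_{k=1}^{s-1}\ell(x_{k+1}\Rightarrow y_k)$. Affine data: real affine coroots $\gamma^\vee+k\tilde\delta$ ($\gamma\in\Delta$, $k\in\mathbb{Z}$, $\tilde\delta$ formal); for $\beta^\vee=\gamma^\vee+k\tilde\delta$ put $\overline{\beta^\vee}=\gamma^\vee$, $\overline\beta=\gamma$, $\deg(\beta^\vee)=k$; it is positive if $k>0$ or ($k=0$, $\gamma\in\Delta^+$), negative otherwise; $t_\lambda(\gamma^\vee+k\tilde\delta)=\gamma^\vee+(k-\langle\lambda,\gamma^\vee\rangle)\tilde\delta$; $\mathrm{Inv}(\lambda)$ is the set of positive real affine coroots $\beta^\vee$ with $t_\lambda(\beta^\vee)$ negative (for these, $\langle\lambda,\overline{\beta^\vee}\rangle>0$ and $\overline\beta\in\Delta^+(\lambda)_{>0}\sqcup(-\Delta^+(\lambda)_{<0})$); put $d(\beta^\vee)=\deg(\beta^\vee)/\langle\lambda,\overline{\beta^\vee}\rangle$. Order $\prec$ on $\Delta^+(\lambda)_{>0}\sqcup(-\Delta^+(\lambda)_{<0})$: elements of $\Delta^+(\lambda)_{>0}$ precede those of $-\Delta^+(\lambda)_{<0}$; $\gamma\prec\gamma'$ iff $\gamma\lhd\gamma'$ on $\Delta^+(\lambda)_{>0}$; $-\alpha\prec-\alpha'$ iff $\alpha\lhd\alpha'$ on $-\Delta^+(\lambda)_{<0}$.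 Order $<$ on $\mathrm{Inv}(\lambda)$: $\beta^\vee<\beta'^\vee$ iff $d(\beta^\vee)<d(\beta'^\vee)$, or they are equal and $\overline{\beta'}\prec\overline\beta$. Write $\mathrm{Inv}(\lambda)=\{\beta_1^\vee<\dots<\beta_r^\vee\}$, $\gamma_k:=\overline{\beta_k}$, $d_k:=d(\beta_k^\vee)$, and $\Gamma:=(\gamma_1,\dots,\gamma_r)$. Admissible subsets: for $w\in W$, $\mathcal{A}(w,\Gamma)$ is the set of $A=\{j_1<\dots<j_p\}\subseteq\{1,\dots,r\}$ such that $w=u_0\xrightarrow{|\gamma_{j_1}|}u_1\to\cdots\xrightarrow{|\gamma_{j_p}|}u_p$ is a directed path in $\mathrm{QBG}(W)$, where $u_a:=ws_{|\gamma_{j_1}|}\cdots s_{|\gamma_{j_a}|}$; $\mathrm{end}(A):=u_p$; $n(A):=\#\{j\in A\mid\gamma_j\in-\Delta^+\}$. One has $0\le d_{j_1}\le\dots\le d_{j_p}\le1$. The map $\Xi$: let $0<c_1<\dots<c_{t-1}<1$ ($t\ge1$) be the distinct values among $d_{j_1},\dots,d_{j_p}$ lying strictly between $0$ and $1$; put $c_0:=0$, $c_t:=1$. For $1\le a\le t$ let $m_a:=\#\{b\mid d_{j_b}<c_a\}$; for $1\le a\le t-1$ let $n_a:=m_a+\#\{b\mid m_a<b\le m_{a+1},\ \gamma_{j_b}\in-\Delta^+\}$. Then $\Xi(A):=(x_1,\dots,x_t;y_1,\dots,y_{t-1};\sigma_0,\dots,\sigma_t)$ with $x_i:=u_{m_{t+1-i}}$,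 $y_i:=u_{n_{t-i}}$, $\sigma_i:=1-c_{t-i}$; this lies in $\mathrm{IQLS}(\lambda)$. *)

theory Defs
  imports "HOL-Analysis.Analysis"
begin

definition cpair :: "'a::euclidean_space \<Rightarrow> 'a \<Rightarrow> real" where
  "cpair v \<alpha> = 2 * (v \<bullet> \<alpha>) / (\<alpha> \<bullet> \<alpha>)"

definition refl :: "'a::euclidean_space \<Rightarrow> 'a \<Rightarrow> 'a" where
  "refl \<alpha> v = v - cpair v \<alpha> *\<^sub>R \<alpha>"

text \<open>Irreducible, reduced, crystallographic root system spanning the ambient
  Euclidean space (= root system of a finite-dimensional complex simple Lie algebra).\<close>
definition root_system :: "'a::euclidean_space set \<Rightarrow> bool" where
  "root_system R \<longleftrightarrow>
     finite R \<and> 0 \<notin> R \<and> span R = UNIV \<and>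
     (\<forall>\<alpha>\<in>R. \<forall>\<beta>\<in>R. refl \<alpha> \<beta> \<in> R) \<and>
     (\<forall>\<alpha>\<in>R. \<forall>\<beta>\<in>R. cpair \<beta> \<alpha> \<in> \<int>) \<and>
     (\<forall>\<alpha>\<in>R. \<forall>c::real. c *\<^sub>R \<alpha> \<in> R \<longrightarrow> c = 1 \<or> c = -1) \<and>
     (\<nexists>R1 R2. R1 \<noteq> {} \<and> R2 \<noteq> {} \<and> R1 \<union> R2 = R \<and> R1 \<inter> R2 = {} \<and>
        (\<forall>\<alpha>\<in>R1. \<forall>\<beta>\<in>R2. \<alpha> \<bullet> \<beta> = 0))"

definition pos_system :: "'a::euclidean_space set \<Rightarrow> 'a set \<Rightarrow> bool" where
  "pos_system R Rp \<longleftrightarrow>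
     (\<exists>v. (\<forall>\<alpha>\<in>R. v \<bullet> \<alpha> \<noteq> 0) \<and> Rp = {\<alpha>\<in>R. v \<bullet> \<alpha> > 0})"

definition weights :: "'a::euclidean_space set \<Rightarrow> 'a set" where
  "weights R = {lam. \<forall>\<alpha>\<in>R. cpair lam \<alpha> \<in> \<int>}"

definition rho :: "'a::euclidean_space set \<Rightarrow> 'a" where
  "rho Rp = (1/2) *\<^sub>R (\<Sum>\<alpha>\<in>Rp. \<alpha>)"

inductive_set weyl :: "'a::euclidean_space set \<Rightarrow> ('a \<Rightarrow> 'a) set" for R where
  weyl_id: "id \<in> weyl R"
| weyl_step: "w \<in> weyl R \<Longrightarrow> \<alpha> \<in> R \<Longrightarrow> w \<circ> refl \<alpha> \<in> weyl R"

definition wlen :: "'a::euclidean_space set \<Rightarrow> ('a \<Rightarrow> 'a) \<Rightarrow> nat" where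
  "wlen Rp w = card {\<alpha>\<in>Rp. w \<alpha> \<notin> Rp}"

definition qbg_edge :: "'a::euclidean_space set \<Rightarrow> 'a set \<Rightarrow> ('a \<Rightarrow> 'a) \<Rightarrow> 'a \<Rightarrow> ('a \<Rightarrow> 'a) \<Rightarrow> bool" where
  "qbg_edge R Rp x \<alpha> y \<longleftrightarrow>
     x \<in> weyl R \<and> \<alpha> \<in> Rp \<and> y = x \<circ> refl \<alpha> \<and>
     (wlen Rp y = wlen Rp x + 1 \<or>
      real (wlen Rp y) = real (wlen Rp x) - 2 * cpair (rho Rp) \<alpha> + 1)"

fun qbg_path :: "'a::euclidean_space set \<Rightarrow> 'a set \<Rightarrow> ('a \<Rightarrow> 'a) \<Rightarrow> 'a list \<Rightarrow> ('a \<Rightarrow> 'a) \<Rightarrow> bool" where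
  "qbg_path R Rp x [] y \<longleftrightarrow> x = y"
| "qbg_path R Rp x (\<alpha> # as) y \<longleftrightarrow> qbg_edge R Rp x \<alpha> (x \<circ> refl \<alpha>) \<and> qbg_path R Rp (x \<circ> refl \<alpha>) as y"

definition qbg_dist :: "'a::euclidean_space set \<Rightarrow> 'a set \<Rightarrow> ('a \<Rightarrow> 'a) \<Rightarrow> ('a \<Rightarrow> 'a) \<Rightarrow> nat" where
  "qbg_dist R Rp v u = (LEAST n. \<exists>as. length as = n \<and> qbg_path R Rp v as u)"

fun walk :: "('a::euclidean_space \<Rightarrow> 'a) \<Rightarrow> 'a list \<Rightarrow> ('a \<Rightarrow> 'a)" where
  "walk x [] = x"
| "walk x (\<alpha> # as) = walk (x \<circ> refl \<alpha>) as"

definition refl_order :: "'a::euclidean_space set \<Rightarrow> ('a \<Rightarrow> 'a \<Rightarrow> bool) \<Rightarrow> bool" where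
  "refl_order Rp ord \<longleftrightarrow>
     (\<forall>a b. ord a b \<longrightarrow> a \<in> Rp \<and> b \<in> Rp) \<and>
     (\<forall>a. \<not> ord a a) \<and>
     (\<forall>a b c. ord a b \<longrightarrow> ord b c \<longrightarrow> ord a c) \<and>
     (\<forall>a\<in>Rp. \<forall>b\<in>Rp. a \<noteq> b \<longrightarrow> ord a b \<or> ord b a) \<and>
     (\<forall>a\<in>Rp. \<forall>b\<in>Rp. a + b \<in> Rp \<longrightarrow>
        (ord a (a + b) \<and> ord (a + b) b) \<or> (ord b (a + b) \<and> ord (a + b) a))"

definition RO :: "'a::euclidean_space set \<Rightarrow> 'a \<Rightarrow> ('a \<Rightarrow> 'a \<Rightarrow> bool) set" where
  "RO Rp lam = {ord. refl_order Rp ord \<and>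
     (\<forall>a\<in>Rp. \<forall>b\<in>Rp. cpair lam a < 0 \<and> cpair lam b = 0 \<longrightarrow> ord a b) \<and>
     (\<forall>b\<in>Rp. \<forall>c\<in>Rp. cpair lam b = 0 \<and> cpair lam c > 0 \<longrightarrow> ord b c) \<and>
     (\<forall>a\<in>Rp. \<forall>c\<in>Rp. cpair lam a < 0 \<and> cpair lam c > 0 \<longrightarrow> ord a c)}"

(* affine coroot gamma^vee + k delta encoded as the pair (gamma, k) *)
definition inv_set :: "'a::euclidean_space set \<Rightarrow> 'a set \<Rightarrow> 'a \<Rightarrow> ('a \<times> int) set" where
  "inv_set R Rp lam = {(\<gamma>, k). \<gamma> \<in> R \<and> (k > 0 \<or> (k = 0 \<and> \<gamma> \<in> Rp)) \<and>
      (real_of_int k - cpair lam \<gamma> < 0 \<or> (real_of_int k - cpair lam \<gamma> = 0 \<and> \<gamma> \<notin> Rp))}"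

definition dval :: "'a::euclidean_space \<Rightarrow> ('a \<times> int) \<Rightarrow> real" where
  "dval lam \<beta> = real_of_int (snd \<beta>) / cpair lam (fst \<beta>)"

(* the order prec on Delta+(lam)_{>0} disjoint-union -Delta+(lam)_{<0} *)
definition prec :: "'a::euclidean_space set \<Rightarrow> ('a \<Rightarrow> 'a \<Rightarrow> bool) \<Rightarrow> 'a \<Rightarrow> 'a \<Rightarrow> bool" where
  "prec Rp ord g g' \<longleftrightarrow>
     (g \<in> Rp \<and> g' \<notin> Rp) \<or> (g \<in> Rp \<and> g' \<in> Rp \<and> ord g g') \<or>
     (g \<notin> Rp \<and> g' \<notin> Rp \<and> ord (-g) (-g'))"

definition inv_less :: "'a::euclidean_space set \<Rightarrow> ('a \<Rightarrow> 'a \<Rightarrow> bool) \<Rightarrow> 'a \<Rightarrow> ('a \<times> int) \<Rightarrow> ('a \<times> int) \<Rightarrow> bool" where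
  "inv_less Rp ord lam \<beta> \<beta>' \<longleftrightarrow>
     dval lam \<beta> < dval lam \<beta>' \<or> (dval lam \<beta> = dval lam \<beta>' \<and> prec Rp ord (fst \<beta>') (fst \<beta>))"

section \<open>Admissible subsets (indices are 0-based positions in the list bs)\<close>

definition abs_root :: "'a::euclidean_space set \<Rightarrow> 'a \<Rightarrow> 'a" where
  "abs_root Rp g = (if g \<in> Rp then g else - g)"

definition adm_roots :: "'a::euclidean_space set \<Rightarrow> ('a \<times> int) list \<Rightarrow> nat set \<Rightarrow> 'a list" where
  "adm_roots Rp bs A = map (\<lambda>j. abs_root Rp (fst (bs ! j))) (sorted_list_of_set A)"

definition admissible :: "'a::euclidean_space set \<Rightarrow> 'a set \<Rightarrow> ('a \<times> int) list \<Rightarrow> ('a \<Rightarrow> 'a) \<Rightarrow> nat set \<Rightarrow> bool" where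
  "admissible R Rp bs w A \<longleftrightarrow> A \<subseteq> {..<length bs} \<and>
     qbg_path R Rp w (adm_roots Rp bs A) (walk w (adm_roots Rp bs A))"

definition end_adm :: "'a::euclidean_space set \<Rightarrow> ('a \<times> int) list \<Rightarrow> ('a \<Rightarrow> 'a) \<Rightarrow> nat set \<Rightarrow> ('a \<Rightarrow> 'a)" where
  "end_adm Rp bs w A = walk w (adm_roots Rp bs A)"

definition n_adm :: "'a::euclidean_space set \<Rightarrow> ('a \<times> int) list \<Rightarrow> nat set \<Rightarrow> nat" where
  "n_adm Rp bs A = card {j\<in>A. fst (bs ! j) \<notin> Rp}"

(* an interpolated QLS path (x_1..x_s; y_1..y_{s-1}; sigma_0..sigma_s) is encoded as a triple of lists *)
definition Xi :: "'a::euclidean_space set \<Rightarrow> 'a \<Rightarrow> ('a \<times> int) list \<Rightarrow> ('a \<Rightarrow> 'a) \<Rightarrow> nat set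
                  \<Rightarrow> ('a \<Rightarrow> 'a) list \<times> ('a \<Rightarrow> 'a) list \<times> real list" where
  "Xi Rp lam bs w A =
    (let js = sorted_list_of_set A; p = length js;
         dd = (\<lambda>b. dval lam (bs ! (js ! (b - 1))));
         cs = sorted_list_of_set {dd b | b. b \<in> {1..p} \<and> 0 < dd b \<and> dd b < 1};
         t = length cs + 1;
         c = (\<lambda>a. if a = 0 then 0 else if t \<le> a then 1 else cs ! (a - 1));
         m = (\<lambda>a. card {b \<in> {1..p}. dd b < c a});
         n = (\<lambda>a. m a + card {b \<in> {1..p}. m a < b \<and> b \<le> m (a + 1) \<and> fst (bs ! (js ! (b - 1))) \<notin> Rp});
         u = (\<lambda>k. walk w (take k (adm_roots Rp bs A)))
     in (map (\<lambda>i. u (m (t + 1 - i))) [1..<t + 1],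
         map (\<lambda>i. u (n (t - i))) [1..<t],
         map (\<lambda>i. 1 - c (t - i)) [0..<t + 1]))"

definition iota :: "('a \<Rightarrow> 'a) list \<times> ('a \<Rightarrow> 'a) list \<times> real list \<Rightarrow> ('a \<Rightarrow> 'a)" where
  "iota \<eta> = hd (fst \<eta>)"

definition nega :: "'a::euclidean_space set \<Rightarrow> 'a set \<Rightarrow> ('a \<Rightarrow> 'a) list \<times> ('a \<Rightarrow> 'a) list \<times> real list \<Rightarrow> nat" where
  "nega R Rp \<eta> = (\<Sum>k<length (fst \<eta>) - 1. qbg_dist R Rp (fst \<eta> ! (k + 1)) (fst (snd \<eta>) ! k))"

end

theory Submission
  imports Defs
begin


lemma cpair_diff: "cpair (a - b) \<alpha> = cpair a \<alpha> - cpair b \<alpha>"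
  by (simp add: cpair_def inner_diff_left diff_divide_distrib algebra_simps)

lemma cpair_scale: "cpair (c *\<^sub>R a) \<alpha> = c * cpair a \<alpha>"
  by (simp add: cpair_def)

lemma cpair_neg: "cpair (- a) \<alpha> = - cpair a \<alpha>"
  by (simp add: cpair_def)

lemma cpair_self: "\<alpha> \<noteq> 0 \<Longrightarrow> cpair \<alpha> \<alpha> = 2"
  by (simp add: cpair_def)

lemma cpair_sum: "cpair (sum f S) \<alpha> = (\<Sum>x\<in>S. cpair (f x) \<alpha>)"
  by (simp add: cpair_def inner_sum_left sum_divide_distrib sum_distrib_left)

lemma cpair_refl: "\<alpha> \<noteq> 0 \<Longrightarrow> cpair (refl \<alpha> v) \<alpha> = - cpair v \<alpha>"
  by (simp add: refl_def cpair_diff cpair_scale cpair_self)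

lemma refl_refl: assumes "\<alpha> \<noteq> 0" shows "refl \<alpha> (refl \<alpha> v) = v"
proof -
  have h: "cpair (refl \<alpha> v) \<alpha> = - cpair v \<alpha>" by (rule cpair_refl[OF assms])
  have "refl \<alpha> (refl \<alpha> v) = refl \<alpha> v - cpair (refl \<alpha> v) \<alpha> *\<^sub>R \<alpha>" by (rule refl_def)
  also have "\<dots> = v" using h by (simp add: refl_def)
  finally show ?thesis .
qed

lemma refl_neg: "refl \<alpha> (- v) = - refl \<alpha> v"
  by (simp add: refl_def cpair_neg)

lemma refl_self: "\<alpha> \<noteq> 0 \<Longrightarrow> refl \<alpha> \<alpha> = - \<alpha>"
  by (simp add: refl_def cpair_self) (simp add: algebra_simps scaleR_2)

lemma invol_even:
  fixes g :: "'b \<Rightarrow> int"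
  assumes "finite S" "\<forall>x\<in>S. f x \<in> S" "\<forall>x\<in>S. f (f x) = x"
    "\<forall>x\<in>S. even (g (f x) - g x)" "\<forall>x\<in>S. f x = x \<longrightarrow> even (g x)"
  shows "even (sum g S)"
  using assms
proof (induction "card S" arbitrary: S rule: less_induct)
  case less
  have IH: "even (sum g T)" if "T \<subset> S" "\<forall>y\<in>T. f y \<in> T" for T
  proof -
    have fin: "finite T" using that(1) less.prems(1) finite_subset by auto
    have c: "card T < card S" using that(1) less.prems(1) psubset_card_mono by auto
    show ?thesis
      apply (rule less.hyps[OF c fin that(2)])
      using that(1) less.prems(3,4,5) by blast+
  qed
  show ?case
  proof (cases "S = {}")
    case True then show ?thesis by simp
  next
    case False
    then obtain x where x: "x \<in> S" by blast
    have fx: "f x \<in> S" using less.prems(2) x by blast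
    have ffx: "f (f x) = x" using less.prems(3) x by blast
    let ?T = "S - {x, f x}"
    have cl: "\<forall>y\<in>?T. f y \<in> ?T"
    proof
      fix y assume y: "y \<in> ?T"
      have fy: "f y \<in> S" using less.prems(2) y by blast
      have ffy: "f (f y) = y" using less.prems(3) y by blast
      have "f y \<noteq> x" using ffy y by auto
      moreover have "f y \<noteq> f x"
      proof
        assume "f y = f x" then have "f (f y) = f (f x)" by simp
        then show False using ffy ffx y by simp
      qed
      ultimately show "f y \<in> ?T" using fy by blast
    qed
    have eT: "even (sum g ?T)" using IH[OF _ cl] x by blast
    show ?thesis
    proof (cases "f x = x")
      case True
      have "sum g S = g x + sum g (S - {x})" using x less.prems(1) by (simp add: sum.remove)
      moreover have "S - {x} = ?T" using True by simp
      moreover have "even (g x)" using less.prems(5) x True by blast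
      ultimately show ?thesis using eT by simp
    next
      case False
      have "sum g S = g x + sum g (S - {x})" using x less.prems(1) by (simp add: sum.remove)
      moreover have "sum g (S - {x}) = g (f x) + sum g (S - {x} - {f x})"
        using fx False less.prems(1) by (subst sum.remove[of _ "f x"]) auto
      moreover have "S - {x} - {f x} = ?T" by blast
      moreover have "even (g (f x) - g x)" using less.prems(4) x by blast
      moreover have "g x + g (f x) = 2 * g x + (g (f x) - g x)" by simp
      ultimately show ?thesis using eT by (metis add.assoc even_add even_mult_iff even_numeral)
    qed
  qed
qed

lemma rho_int:
  assumes rs: "root_system R" and ps: "pos_system R Rp" and a: "\<alpha> \<in> Rp"
  shows "\<exists>z::int. cpair (rho Rp) \<alpha> = of_int z"
proof -
  obtain v where v: "\<forall>\<beta>\<in>R. v \<bullet> \<beta> \<noteq> 0" and Rp: "Rp = {\<beta>\<in>R. v \<bullet> \<beta> > 0}"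
    using ps unfolding pos_system_def by blast
  have fin: "finite R" using rs unfolding root_system_def by (elim conjE) assumption
  have z: "0 \<notin> R" using rs unfolding root_system_def by (elim conjE) assumption
  have rR: "\<forall>\<alpha>\<in>R. \<forall>\<beta>\<in>R. refl \<alpha> \<beta> \<in> R" using rs unfolding root_system_def by (elim conjE) assumption
  have iR: "\<forall>\<alpha>\<in>R. \<forall>\<beta>\<in>R. cpair \<beta> \<alpha> \<in> \<int>" using rs unfolding root_system_def by (elim conjE) assumption
  have red: "\<forall>\<alpha>\<in>R. \<forall>c::real. c *\<^sub>R \<alpha> \<in> R \<longrightarrow> c = 1 \<or> c = -1"
    using rs unfolding root_system_def by (elim conjE) assumption
  have RpR: "Rp \<subseteq> R" using Rp by blast
  have finp: "finite Rp" using fin RpR finite_subset by blast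
  have aR: "\<alpha> \<in> R" using a RpR by blast
  have a0: "\<alpha> \<noteq> 0" using aR z by blast
  have negR: "- b \<in> R" if "b \<in> R" for b
  proof -
    have "b \<noteq> 0" using that z by blast
    then have "refl b b = - b" by (rule refl_self)
    moreover have "refl b b \<in> R" using rR that by blast
    ultimately show ?thesis by simp
  qed
  define g where "g b = \<lfloor>cpair b \<alpha>\<rfloor>" for b
  have gi: "of_int (g b) = cpair b \<alpha>" if "b \<in> R" for b
  proof -
    have "cpair b \<alpha> \<in> \<int>" using iR aR that by blast
    then obtain k where "cpair b \<alpha> = of_int k" by (elim Ints_cases)
    then show ?thesis unfolding g_def by simp
  qed
  define f where "f b = abs_root Rp (refl \<alpha> b)" for b
  have absR: "abs_root Rp b \<in> Rp" if "b \<in> R" for b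
    using that v negR unfolding Rp abs_root_def by auto
  have absP: "abs_root Rp (- b) = b" if "b \<in> Rp" for b
    using that unfolding Rp abs_root_def by auto
  have S1: "\<forall>x\<in>Rp. f x \<in> Rp" unfolding f_def using absR rR aR RpR by blast
  have S2: "\<forall>x\<in>Rp. f (f x) = x"
  proof
    fix x assume x: "x \<in> Rp"
    show "f (f x) = x"
    proof (cases "refl \<alpha> x \<in> Rp")
      case True
      then show ?thesis using x unfolding f_def abs_root_def by (simp add: refl_refl a0)
    next
      case False
      then have "f x = - refl \<alpha> x" unfolding f_def abs_root_def by simp
      then have "f (f x) = abs_root Rp (- x)" unfolding f_def by (simp add: refl_neg refl_refl a0)
      then show ?thesis using absP x by simp
    qed
  qed
  have S3: "\<forall>x\<in>Rp. even (g (f x) - g x)"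
  proof
    fix x assume x: "x \<in> Rp"
    have xR: "x \<in> R" using x RpR by blast
    have rxR: "refl \<alpha> x \<in> R" using rR aR xR by blast
    show "even (g (f x) - g x)"
    proof (cases "refl \<alpha> x \<in> Rp")
      case True
      then have "of_int (g (f x)) = - (of_int (g x) :: real)"
        unfolding f_def abs_root_def using gi rxR xR cpair_refl a0 by simp
      then have "g (f x) = - g x" by linarith
      then show ?thesis by simp
    next
      case False
      then have "of_int (g (f x)) = (of_int (g x) :: real)"
        unfolding f_def abs_root_def using gi[OF negR[OF rxR]] gi[OF xR] by (simp add: cpair_neg cpair_refl a0)
      then have "g (f x) = g x" by linarith
      then show ?thesis by simp
    qed
  qed
  have S4: "\<forall>x\<in>Rp. f x = x \<longrightarrow> even (g x)"
  proof (intro ballI impI)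
    fix x assume x: "x \<in> Rp" and fx: "f x = x"
    have xR: "x \<in> R" using x RpR by blast
    show "even (g x)"
    proof (cases "refl \<alpha> x \<in> Rp")
      case True
      then have "refl \<alpha> x = x" using fx unfolding f_def abs_root_def by simp
      then have "cpair x \<alpha> *\<^sub>R \<alpha> = 0" unfolding refl_def by simp
      then have "cpair x \<alpha> = 0" using a0 by simp
      then have "g x = 0" using gi[OF xR] by simp
      then show ?thesis by simp
    next
      case False
      then have "refl \<alpha> x = - x" using fx unfolding f_def abs_root_def by (metis minus_minus)
      then have "x - cpair x \<alpha> *\<^sub>R \<alpha> = - x" unfolding refl_def by simp
      then have "2 *\<^sub>R x = cpair x \<alpha> *\<^sub>R \<alpha>" by (simp add: algebra_simps scaleR_2)
      then have "(1/2::real) *\<^sub>R (2 *\<^sub>R x) = (1/2::real) *\<^sub>R (cpair x \<alpha> *\<^sub>R \<alpha>)" by simp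
      then have "x = (cpair x \<alpha> / 2) *\<^sub>R \<alpha>" by simp
      then have "(cpair x \<alpha> / 2) *\<^sub>R \<alpha> \<in> R" using xR by simp
      then have "cpair x \<alpha> / 2 = 1 \<or> cpair x \<alpha> / 2 = -1" using red aR by blast
      then have "of_int (g x) = (2::real) \<or> of_int (g x) = (-2::real)" using gi xR by auto
      then have "g x = 2 \<or> g x = -2" by linarith
      then show ?thesis by auto
    qed
  qed
  have "even (sum g Rp)" using invol_even[OF finp S1 S2 S3 S4] .
  then obtain k where k: "sum g Rp = 2 * k" by blast
  have "cpair (rho Rp) \<alpha> = (1/2) * (\<Sum>b\<in>Rp. cpair b \<alpha>)"
    unfolding rho_def by (simp add: cpair_scale cpair_sum)
  also have "(\<Sum>b\<in>Rp. cpair b \<alpha>) = (\<Sum>b\<in>Rp. of_int (g b))"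
    using gi RpR by (intro sum.cong) auto
  also have "\<dots> = of_int (2 * k)" using k by (metis of_int_sum)
  finally have "cpair (rho Rp) \<alpha> = of_int k" by simp
  then show ?thesis by blast
qed

lemma edge_odd:
  assumes rs: "root_system R" and ps: "pos_system R Rp" and e: "qbg_edge R Rp x \<alpha> y"
  shows "odd (int (wlen Rp y) - int (wlen Rp x))"
proof -
  have a: "\<alpha> \<in> Rp" using e unfolding qbg_edge_def by blast
  obtain z where z: "cpair (rho Rp) \<alpha> = of_int z" using rho_int[OF rs ps a] by blast
  from e have "wlen Rp y = wlen Rp x + 1 \<or>
      real (wlen Rp y) = real (wlen Rp x) - 2 * cpair (rho Rp) \<alpha> + 1" unfolding qbg_edge_def by blast
  then show ?thesis
  proof
    assume "wlen Rp y = wlen Rp x + 1" then show ?thesis by simp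
  next
    assume "real (wlen Rp y) = real (wlen Rp x) - 2 * cpair (rho Rp) \<alpha> + 1"
    then have "real_of_int (int (wlen Rp y)) = real_of_int (int (wlen Rp x) - 2 * z + 1)" using z by simp
    then have "int (wlen Rp y) = int (wlen Rp x) - 2 * z + 1" using of_int_eq_iff by blast
    then show ?thesis by simp
  qed
qed



lemma walk_append: "walk x (xs @ ys) = walk (walk x xs) ys"
  by (induction xs arbitrary: x) auto

lemma path_append:
  "qbg_path R Rp x (xs @ ys) z \<longleftrightarrow> qbg_path R Rp x xs (walk x xs) \<and> qbg_path R Rp (walk x xs) ys z"
  by (induction xs arbitrary: x) auto

lemma path_parity:
  assumes rs: "root_system R" and ps: "pos_system R Rp"
  shows "qbg_path R Rp x xs y \<Longrightarrow> even (int (wlen Rp y) - int (wlen Rp x) - int (length xs))"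
proof (induction xs arbitrary: x)
  case Nil then show ?case by simp
next
  case (Cons a xs)
  then have e: "qbg_edge R Rp x a (x \<circ> refl a)" and p: "qbg_path R Rp (x \<circ> refl a) xs y" by auto
  have o: "odd (int (wlen Rp (x \<circ> refl a)) - int (wlen Rp x))" by (rule edge_odd[OF rs ps e])
  have ev: "even (int (wlen Rp y) - int (wlen Rp (x \<circ> refl a)) - int (length xs))" using Cons.IH[OF p] .
  have eq: "int (wlen Rp y) - int (wlen Rp x) - int (length (a # xs)) =
     (int (wlen Rp (x \<circ> refl a)) - int (wlen Rp x)) + (int (wlen Rp y) - int (wlen Rp (x \<circ> refl a)) - int (length xs)) - 1"
    by simp
  obtain a1 where a1: "int (wlen Rp (x \<circ> refl a)) - int (wlen Rp x) = 2 * a1 + 1" using o by (elim oddE)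
  obtain b1 where b1: "int (wlen Rp y) - int (wlen Rp (x \<circ> refl a)) - int (length xs) = 2 * b1" using ev by (elim evenE)
  show ?case unfolding eq a1 b1 by simp
qed

lemma dist_parity:
  assumes rs: "root_system R" and ps: "pos_system R Rp" and p: "qbg_path R Rp v as u"
  shows "even (int (qbg_dist R Rp v u) - (int (wlen Rp u) - int (wlen Rp v)))"
proof -
  have "\<exists>as. length as = qbg_dist R Rp v u \<and> qbg_path R Rp v as u"
    unfolding qbg_dist_def by (rule LeastI_ex) (use p in blast)
  then obtain as' where "length as' = qbg_dist R Rp v u" "qbg_path R Rp v as' u" by blast
  then have len: "length as' = qbg_dist R Rp v u" and pp: "even (int (wlen Rp u) - int (wlen Rp v) - int (length as'))"
    using path_parity[OF rs ps] by blast+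
  have "int (qbg_dist R Rp v u) - (int (wlen Rp u) - int (wlen Rp v)) = - (int (wlen Rp u) - int (wlen Rp v) - int (length as'))"
    using len by simp
  then show ?thesis using pp by simp
qed

lemma inv_props:
  assumes "\<beta> \<in> inv_set R Rp lam"
  shows "0 \<le> dval lam \<beta>" "dval lam \<beta> \<le> 1" "fst \<beta> \<notin> Rp \<Longrightarrow> 0 < dval lam \<beta>"
    "fst \<beta> \<in> Rp \<Longrightarrow> dval lam \<beta> < 1"
proof -
  obtain g k where b: "\<beta> = (g, k)" by force
  have h: "(k > 0 \<or> (k = 0 \<and> g \<in> Rp)) \<and>
      (real_of_int k - cpair lam g < 0 \<or> (real_of_int k - cpair lam g = 0 \<and> g \<notin> Rp))"
    using assms unfolding b inv_set_def by simp
  have cp: "cpair lam g > 0" using h by (smt (verit) of_int_0 of_int_pos)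
  have d: "dval lam \<beta> = real_of_int k / cpair lam g" unfolding b dval_def by simp
  have k0: "real_of_int k \<ge> 0" using h by auto
  have k1: "real_of_int k \<le> cpair lam g" using h by auto
  show "0 \<le> dval lam \<beta>" unfolding d using cp k0 by simp
  show "dval lam \<beta> \<le> 1" unfolding d using cp k1 by simp
  show "fst \<beta> \<notin> Rp \<Longrightarrow> 0 < dval lam \<beta>" unfolding b dval_def using cp h by simp
  show "fst \<beta> \<in> Rp \<Longrightarrow> dval lam \<beta> < 1" unfolding b dval_def using cp h by simp
qed



theorem corollary5p9:
  fixes R Rp :: "'a::euclidean_space set" and lam :: 'a
    and ord :: "'a \<Rightarrow> 'a \<Rightarrow> bool" and w :: "'a \<Rightarrow> 'a"
    and bs :: "('a \<times> int) list" and A :: "nat set"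
  assumes "root_system R" and "pos_system R Rp"
    and "lam \<in> weights R"
    and "ord \<in> RO Rp lam"
    and "w \<in> weyl R"
    and "set bs = inv_set R Rp lam" and "sorted_wrt (inv_less Rp ord lam) bs"
    and "admissible R Rp bs w A"
  shows "int (n_adm Rp bs A) mod 2 =
         (int (nega R Rp (Xi Rp lam bs w A)) + int (wlen Rp (end_adm Rp bs w A))
            - int (wlen Rp (iota (Xi Rp lam bs w A)))) mod 2"
proof -
  note rs = assms(1) and ps = assms(2) and setbs = assms(6) and sbs = assms(7) and adm = assms(8)
  define js where "js = sorted_list_of_set A"
  define p where "p = length js"
  define dd where "dd = (\<lambda>b. dval lam (bs ! (js ! (b - 1))))"
  define cs where "cs = sorted_list_of_set {dd b | b. b \<in> {1..p} \<and> 0 < dd b \<and> dd b < 1}"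
  define t where "t = length cs + 1"
  define c where "c = (\<lambda>a. if a = 0 then 0 else if t \<le> a then 1 else cs ! (a - 1))"
  define m where "m = (\<lambda>a. card {b \<in> {1..p}. dd b < c a})"
  define neg where "neg = (\<lambda>b. fst (bs ! (js ! (b - 1))) \<notin> Rp)"
  define I where "I = (\<lambda>a. {b \<in> {1..p}. m a < b \<and> b \<le> m (a + 1) \<and> neg b})"
  define n where "n = (\<lambda>a. m a + card (I a))"
  define L where "L = adm_roots Rp bs A"
  define u where "u = (\<lambda>k. walk w (take k L))"
  have Xi_eq: "Xi Rp lam bs w A = (map (\<lambda>i. u (m (t + 1 - i))) [1..<t + 1],
       map (\<lambda>i. u (n (t - i))) [1..<t], map (\<lambda>i. 1 - c (t - i)) [0..<t + 1])"
    unfolding Xi_def Let_def js_def p_def dd_def cs_def t_def c_def m_def n_def neg_def L_def u_def I_def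
    by (rule refl)
  have t1: "t \<ge> 1" unfolding t_def by simp
  have nega_eq: "nega R Rp (Xi Rp lam bs w A) = (\<Sum>k<t - 1. qbg_dist R Rp (u (m (t - Suc k))) (u (n (t - Suc k))))"
    unfolding nega_def Xi_eq by (intro sum.cong) (auto simp del: upt_Suc)
  have iota_eq: "iota (Xi Rp lam bs w A) = u (m t)"
    unfolding iota_def Xi_eq using t1 by (simp add: upt_rec del: upt_Suc)

  have Asub: "A \<subseteq> {..<length bs}" and pth: "qbg_path R Rp w L (walk w L)"
    using adm unfolding admissible_def L_def by blast+
  have finA: "finite A" using Asub finite_subset by blast
  have setjs: "set js = A" using finA js_def by simp
  have sjs: "sorted_wrt (<) js" unfolding js_def by (rule strict_sorted_list_of_set)
  have djs: "distinct js" unfolding js_def by simp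
  have lenL: "length L = p" unfolding L_def adm_roots_def js_def p_def by simp
  have jsin: "js ! (b - 1) \<in> A" if "b \<in> {1..p}" for b
    using that setjs nth_mem[of "b - 1" js] p_def by auto
  have jslt: "js ! (b - 1) < length bs" if "b \<in> {1..p}" for b
    using jsin[OF that] Asub by auto
  have bsin: "bs ! (js ! (b - 1)) \<in> inv_set R Rp lam" if "b \<in> {1..p}" for b
    using setbs nth_mem[OF jslt[OF that]] by simp
  have dd1: "dd b \<le> 1" if "b \<in> {1..p}" for b
    using inv_props(2)[OF bsin[OF that]] unfolding dd_def by simp
  have ddneg: "0 < dd b" if "b \<in> {1..p}" "neg b" for b
    using inv_props(3)[OF bsin[OF that(1)]] that(2) unfolding dd_def neg_def by simp
  have ddpos: "dd b < 1" if "b \<in> {1..p}" "\<not> neg b" for b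
    using inv_props(4)[OF bsin[OF that(1)]] that(2) unfolding dd_def neg_def by simp
  have ddmono: "dd b \<le> dd b'" if b: "b \<in> {1..p}" "b' \<in> {1..p}" "b \<le> b'" for b b'
  proof (cases "b = b'")
    case True then show ?thesis by simp
  next
    case False
    then have "b - 1 < b' - 1" "b' - 1 < length js" using b p_def by auto
    then have lt: "js ! (b - 1) < js ! (b' - 1)" using sorted_wrt_nth_less[OF sjs] by blast
    have "inv_less Rp ord lam (bs ! (js ! (b - 1))) (bs ! (js ! (b' - 1)))"
      using sorted_wrt_nth_less[OF sbs lt jslt[OF b(2)]] .
    then show ?thesis unfolding inv_less_def dd_def by auto
  qed
  define V where "V = {dd b | b. b \<in> {1..p} \<and> 0 < dd b \<and> dd b < 1}"
  have finV: "finite V"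
  proof -
    have "V = dd ` {b \<in> {1..p}. 0 < dd b \<and> dd b < 1}" unfolding V_def by blast
    then show ?thesis by simp
  qed
  have setcs: "set cs = V" unfolding cs_def V_def[symmetric] using finV by simp
  have scs: "sorted cs" unfolding cs_def by simp
  have lencs: "length cs = t - 1" unfolding t_def by simp
  have csV: "0 < x \<and> x < 1" if "x \<in> set cs" for x using that setcs unfolding V_def by auto
  have ct: "c t = 1" unfolding c_def using t1 by simp
  have cle1: "c a \<le> 1" if "1 \<le> a" "a \<le> t" for a
  proof (cases "a = t")
    case True then show ?thesis using ct by simp
  next
    case False
    then have "c a = cs ! (a - 1)" "a - 1 < length cs" using that lencs unfolding c_def by auto
    then show ?thesis using csV[OF nth_mem] by force
  qed
  have cmono: "c a \<le> c a'" if "1 \<le> a" "a \<le> a'" "a' \<le> t" for a a'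
  proof (cases "a' = t")
    case True then show ?thesis using ct cle1 that by auto
  next
    case False
    then have "c a = cs ! (a - 1)" "c a' = cs ! (a' - 1)" "a' - 1 < length cs" "a - 1 \<le> a' - 1"
      using that lencs unfolding c_def by auto
    then show ?thesis using sorted_nth_mono[OF scs] by simp
  qed
  have c1: "c 1 \<le> dd b" if b: "b \<in> {1..p}" "0 < dd b" for b
  proof (cases "dd b < 1")
    case True
    then have ds: "dd b \<in> set cs" using setcs b unfolding V_def by blast
    then obtain i where i: "i < length cs" "cs ! i = dd b" by (metis in_set_conv_nth)
    then have "t \<noteq> 1" "0 < length cs" using lencs by auto
    then have c1e: "c 1 = cs ! 0" using t1 lencs unfolding c_def by auto
    then show ?thesis using i sorted_nth_mono[OF scs, of 0 i] by simp
  next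
    case False
    then show ?thesis using cle1[of 1] t1 by simp
  qed
  have mle: "m a \<le> p" for a
  proof -
    have "m a \<le> card {1..p}" unfolding m_def by (rule card_mono) auto
    then show ?thesis by simp
  qed
  have mmono: "m a \<le> m a'" if "1 \<le> a" "a \<le> a'" "a' \<le> t" for a a'
    unfolding m_def using cmono[OF that] by (intro card_mono) auto
  have F7: "m 1 < b" if b: "b \<in> {1..p}" "neg b" for b
  proof -
    have "{b' \<in> {1..p}. dd b' < c 1} \<subseteq> {1..<b}"
    proof
      fix b' assume b': "b' \<in> {b' \<in> {1..p}. dd b' < c 1}"
      have "\<not> b \<le> b'"
      proof
        assume "b \<le> b'"
        then have "dd b \<le> dd b'" using ddmono b b' by blast
        then show False using c1[OF b(1) ddneg[OF b]] b' by simp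
      qed
      then show "b' \<in> {1..<b}" using b' by auto
    qed
    then have "m 1 \<le> card {1..<b}" unfolding m_def by (intro card_mono) auto
    then show ?thesis using b by auto
  qed
  have F8: "neg b" if b: "b \<in> {1..p}" "m t < b" for b
  proof (rule ccontr)
    assume nn: "\<not> neg b"
    have "{1..b} \<subseteq> {b' \<in> {1..p}. dd b' < c t}"
    proof
      fix b' assume b': "b' \<in> {1..b}"
      then have "b' \<in> {1..p}" using b by auto
      moreover have "dd b' \<le> dd b" using ddmono b b' calculation by auto
      ultimately show "b' \<in> {b' \<in> {1..p}. dd b' < c t}" using ddpos[OF b(1) nn] ct by auto
    qed
    then have "card {1..b} \<le> m t" unfolding m_def by (intro card_mono) auto
    then show False using b by simp
  qed
  have Isub: "I a \<subseteq> {m a<..p}" for a unfolding I_def by auto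
  have nle: "n a \<le> p" for a
  proof -
    have "card (I a) \<le> card {m a<..p}" using Isub by (intro card_mono) auto
    then show ?thesis unfolding n_def using mle[of a] by simp
  qed
  have mn: "m a \<le> n a" for a unfolding n_def by simp
  have cardI: "int (n a) - int (m a) = int (card (I a))" for a by (simp add: n_def)
  have uL: "u p = walk w L" unfolding u_def using lenL by simp
  have subpath: "qbg_path R Rp (u i) (take (j - i) (drop i L)) (u j)" if "i \<le> j" "j \<le> p" for i j
  proof -
    have "qbg_path R Rp w (take j L @ drop j L) (walk w L)" using pth by simp
    then have pj: "qbg_path R Rp w (take j L) (u j)" unfolding u_def path_append by blast
    have tj: "take j L = take i L @ take (j - i) (drop i L)"
      using take_add[of i "j - i" L] that by simp
    show ?thesis using pj unfolding tj path_append u_def walk_append by blast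
  qed
  have par: "even (int (wlen Rp (u j)) - int (wlen Rp (u i)) - (int j - int i))" if "i \<le> j" "j \<le> p" for i j
  proof -
    have "length (take (j - i) (drop i L)) = j - i" using that lenL by simp
    then show ?thesis using path_parity[OF rs ps subpath[OF that]] that by (simp add: of_nat_diff)
  qed
  have dpar: "even (int (qbg_dist R Rp (u i) (u j)) - (int j - int i))" if "i \<le> j" "j \<le> p" for i j
  proof -
    have e1: "even (int (qbg_dist R Rp (u i) (u j)) - (int (wlen Rp (u j)) - int (wlen Rp (u i))))"
      by (rule dist_parity[OF rs ps subpath[OF that]])
    have e2: "even (int (wlen Rp (u j)) - int (wlen Rp (u i)) - (int j - int i))" by (rule par[OF that])
    have "int (qbg_dist R Rp (u i) (u j)) - (int j - int i) =
       (int (qbg_dist R Rp (u i) (u j)) - (int (wlen Rp (u j)) - int (wlen Rp (u i)))) +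
       (int (wlen Rp (u j)) - int (wlen Rp (u i)) - (int j - int i))" by simp
    then show ?thesis using e1 e2 by simp
  qed
  have E1: "even (int (nega R Rp (Xi Rp lam bs w A)) - (\<Sum>k<t - 1. int (card (I (t - Suc k)))))"
  proof -
    have "int (nega R Rp (Xi Rp lam bs w A)) - (\<Sum>k<t - 1. int (card (I (t - Suc k)))) =
      (\<Sum>k<t - 1. int (qbg_dist R Rp (u (m (t - Suc k))) (u (n (t - Suc k)))) - int (card (I (t - Suc k))))"
      unfolding nega_eq by (simp add: sum_subtractf)
    also have "even \<dots>"
    proof (rule dvd_sum)
      fix k assume "k \<in> {..<t - 1}"
      show "2 dvd int (qbg_dist R Rp (u (m (t - Suc k))) (u (n (t - Suc k)))) - int (card (I (t - Suc k)))"
        using dpar[OF mn nle] cardI by metis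
    qed
    finally show ?thesis .
  qed
  have reidx: "(\<Sum>k<t - 1. int (card (I (t - Suc k)))) = (\<Sum>i<t - 1. int (card (I (i + 1))))"
  proof -
    have "(\<Sum>k<t - 1. int (card (I (t - Suc k)))) = (\<Sum>k<t - 1. int (card (I ((t - 1 - Suc k) + 1))))"
    proof (intro sum.cong refl)
      fix k assume "k \<in> {..<t - 1}"
      then have eq: "t - Suc k = t - 1 - Suc k + 1" by auto
      show "int (card (I (t - Suc k))) = int (card (I (t - 1 - Suc k + 1)))" by (simp only: eq)
    qed
    also have "\<dots> = (\<Sum>i<t - 1. int (card (I (i + 1))))"
      by (rule sum.nat_diff_reindex)
    finally show ?thesis .
  qed
  have tel: "(\<Sum>i<j. card (I (i + 1))) = card {b \<in> {1..p}. m 1 < b \<and> b \<le> m (j + 1) \<and> neg b}"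
    if "j \<le> t - 1" for j
    using that
  proof (induction j)
    case 0 then show ?case by simp
  next
    case (Suc j)
    have m1: "m 1 \<le> m (j + 1)" using mmono[of 1 "j + 1"] Suc.prems by simp
    have m2: "m (j + 1) \<le> m (j + 2)" using mmono[of "j + 1" "j + 2"] Suc.prems by simp
    have "{b \<in> {1..p}. m 1 < b \<and> b \<le> m (Suc j + 1) \<and> neg b} =
        {b \<in> {1..p}. m 1 < b \<and> b \<le> m (j + 1) \<and> neg b} \<union> I (j + 1)"
      unfolding I_def using m1 m2 by auto
    moreover have "card (\<dots>) = card {b \<in> {1..p}. m 1 < b \<and> b \<le> m (j + 1) \<and> neg b} + card (I (j + 1))"
      by (rule card_Un_disjoint) (auto simp: I_def)
    ultimately show ?case using Suc by simp
  qed
  have F13: "n_adm Rp bs A = card {b \<in> {1..p}. neg b}"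
  proof -
    have "{j \<in> A. fst (bs ! j) \<notin> Rp} = (\<lambda>b. js ! (b - 1)) ` {b \<in> {1..p}. neg b}"
    proof
      show "(\<lambda>b. js ! (b - 1)) ` {b \<in> {1..p}. neg b} \<subseteq> {j \<in> A. fst (bs ! j) \<notin> Rp}"
        using jsin unfolding neg_def by auto
      show "{j \<in> A. fst (bs ! j) \<notin> Rp} \<subseteq> (\<lambda>b. js ! (b - 1)) ` {b \<in> {1..p}. neg b}"
      proof
        fix j assume j: "j \<in> {j \<in> A. fst (bs ! j) \<notin> Rp}"
        then obtain i where i: "i < p" "js ! i = j" using setjs p_def by (metis (no_types, lifting) in_set_conv_nth mem_Collect_eq)
        then have "Suc i \<in> {b \<in> {1..p}. neg b}" using j unfolding neg_def by auto
        moreover have "j = js ! (Suc i - 1)" using i by simp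
        ultimately show "j \<in> (\<lambda>b. js ! (b - 1)) ` {b \<in> {1..p}. neg b}" by blast
      qed
    qed
    moreover have "inj_on (\<lambda>b. js ! (b - 1)) {b \<in> {1..p}. neg b}"
    proof (rule inj_onI)
      fix x y assume x: "x \<in> {b \<in> {1..p}. neg b}" and y: "y \<in> {b \<in> {1..p}. neg b}" and e: "js ! (x - 1) = js ! (y - 1)"
      have "x - 1 = y - 1" using nth_eq_iff_index_eq[OF djs, of "x - 1" "y - 1"] e x y p_def by auto
      then show "x = y" using x y by auto
    qed
    ultimately show ?thesis unfolding n_adm_def by (simp add: card_image)
  qed
  have F14: "card {b \<in> {1..p}. neg b} = card {b \<in> {1..p}. m 1 < b \<and> b \<le> m t \<and> neg b} + (p - m t)"
  proof -
    have "{b \<in> {1..p}. neg b} = {b \<in> {1..p}. m 1 < b \<and> b \<le> m t \<and> neg b} \<union> {m t<..p}"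
      using F7 F8 by (auto simp: not_le)
    moreover have "card (\<dots>) = card {b \<in> {1..p}. m 1 < b \<and> b \<le> m t \<and> neg b} + card {m t<..p}"
      by (rule card_Un_disjoint) auto
    ultimately show ?thesis by simp
  qed
  have E3: "even (int (wlen Rp (u p)) - int (wlen Rp (u (m t))) - (int p - int (m t)))"
    by (rule par[OF mle order_refl])
  have tel2: "(\<Sum>i<t - 1. int (card (I (i + 1)))) = int (card {b \<in> {1..p}. m 1 < b \<and> b \<le> m t \<and> neg b})"
    using tel[of "t - 1"] t1 by (simp flip: of_nat_sum)
  have fin: "int (n_adm Rp bs A) =
      (\<Sum>k<t - 1. int (card (I (t - Suc k)))) + (int p - int (m t))"
    using F13 F14 reidx tel2 mle[of t] by simp
  have endeq: "end_adm Rp bs w A = u p" unfolding end_adm_def uL L_def ..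
  have "even (int (n_adm Rp bs A) - (int (nega R Rp (Xi Rp lam bs w A)) + int (wlen Rp (end_adm Rp bs w A))
            - int (wlen Rp (iota (Xi Rp lam bs w A)))))"
  proof -
    have eqn: "int (n_adm Rp bs A) - (int (nega R Rp (Xi Rp lam bs w A)) + int (wlen Rp (end_adm Rp bs w A))
            - int (wlen Rp (iota (Xi Rp lam bs w A)))) =
       - (int (nega R Rp (Xi Rp lam bs w A)) - (\<Sum>k<t - 1. int (card (I (t - Suc k)))))
       - (int (wlen Rp (u p)) - int (wlen Rp (u (m t))) - (int p - int (m t)))"
      unfolding fin endeq iota_eq by simp
    have ev: "even (- (int (nega R Rp (Xi Rp lam bs w A)) - (\<Sum>k<t - 1. int (card (I (t - Suc k)))))
       - (int (wlen Rp (u p)) - int (wlen Rp (u (m t))) - (int p - int (m t))))"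
      by (rule dvd_diff) (use E1 E3 in simp_all)
    show ?thesis unfolding eqn by (rule ev)
  qed
  then show ?thesis by (simp add: mod_eq_dvd_iff)
qed

end
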